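(* Under the hypotheses of the subprime lemma (as in the context), define $x\sim y$ for $x,y\in V$ iff $R_{xy}$ is the graph of an isomorphism from $\mathbb A_x$ to $\mathbb A_y$. If $x\in V$ is such that $|A_x|\ge 2$ and $|A_x|$ is maximal among all $|A_z|$, $z\in V$, then there exists $y\in V$ with $y\ne x$ and $x\sim y$.
   Context: $\mathbf A$ is a finite relational structure with a majority polymorphism and a Maltsev polymorphism, $\mathcal A=\mathcal V(\mathrm{Alg}(\mathbf A))$ (the variety generated by the algebra of all polymorphisms of $\mathbf A$). $\mathcal I=(V,\{\mathbb A_x\}_{x\in V},\{R_{xy}\}_{(x,y)\in V^2},w)$ with $|V|>1$: each $\mathbb A_x\in\mathcal A$ finite with universe $A_x$; each $R_{xy}$ the universe of a subalgebra of $\mathbb A_x\times\mathbb A_y$, $R_{xx}$ the equality relation, $R_{yx}=R_{xy}^{-1}$, and for $x\ne y$, $R_{xy}$ has both projections onto. For $x\ne y$, $\theta_{xy}=\{(a,a')\in A_x^2\mid\exists b:(a,b),(a',b)\in R_{xy}\}$, $\mu_x=\bigwedge_{y\ne x}\theta_{xy}$, and $\mathbb A_x$ is prime if $\mu_x$ is the equality relation. Every domain either has one element or is subdirectly irreducible (the intersection of its non-equality congruences is not the equality relation) and prime. *)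

theory Defs
  imports Main
begin

definition rel_structure :: "'a set \<Rightarrow> (nat \<times> 'a list set) set \<Rightarrow> bool" where
  "rel_structure A Rels \<longleftrightarrow> A \<noteq> {} \<and>
     (\<forall>(k, S) \<in> Rels. \<forall>t \<in> S. length t = k \<and> set t \<subseteq> A)"

definition finite_rel_structure :: "'a set \<Rightarrow> (nat \<times> 'a list set) set \<Rightarrow> bool" where
  "finite_rel_structure A Rels \<longleftrightarrow> rel_structure A Rels \<and> finite A \<and> finite Rels"

definition polymorphism :: "'a set \<Rightarrow> (nat \<times> 'a list set) set \<Rightarrow> nat \<Rightarrow> ('a list \<Rightarrow> 'a) \<Rightarrow> bool" where
  "polymorphism A Rels n f \<longleftrightarrow>
     (\<forall>xs. length xs = n \<and> set xs \<subseteq> A \<longrightarrow> f xs \<in> A) \<and>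
     (\<forall>(k, S) \<in> Rels. \<forall>ts. length ts = n \<and> set ts \<subseteq> S \<longrightarrow>
        map (\<lambda>j. f (map (\<lambda>t. t ! j) ts)) [0..<k] \<in> S)"

definition majority_polymorphism :: "'a set \<Rightarrow> (nat \<times> 'a list set) set \<Rightarrow> ('a list \<Rightarrow> 'a) \<Rightarrow> bool" where
  "majority_polymorphism A Rels f \<longleftrightarrow> polymorphism A Rels 3 f \<and>
     (\<forall>a\<in>A. \<forall>b\<in>A. f [a, a, b] = a \<and> f [a, b, a] = a \<and> f [b, a, a] = a)"

definition maltsev_polymorphism :: "'a set \<Rightarrow> (nat \<times> 'a list set) set \<Rightarrow> ('a list \<Rightarrow> 'a) \<Rightarrow> bool" where
  "maltsev_polymorphism A Rels m \<longleftrightarrow> polymorphism A Rels 3 m \<and>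
     (\<forall>a\<in>A. \<forall>b\<in>A. m [a, b, b] = a \<and> m [b, b, a] = a)"

text \<open>Operation symbols of Alg(A): pairs (arity, polymorphism).\<close>
type_synonym 'a sym = "nat \<times> ('a list \<Rightarrow> 'a)"

definition poly_sig :: "'a set \<Rightarrow> (nat \<times> 'a list set) set \<Rightarrow> 'a sym set" where
  "poly_sig A Rels = {(n, f). polymorphism A Rels n f}"

datatype 'f trm = Var nat | App 'f "'f trm list"

fun eval_trm :: "('f \<Rightarrow> 'b list \<Rightarrow> 'b) \<Rightarrow> (nat \<Rightarrow> 'b) \<Rightarrow> 'f trm \<Rightarrow> 'b" where
  "eval_trm I s (Var i) = s i"
| "eval_trm I s (App f ts) = I f (map (eval_trm I s) ts)"

fun wf_trm :: "('a sym) set \<Rightarrow> 'a sym trm \<Rightarrow> bool" where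
  "wf_trm Sig (Var i) = True"
| "wf_trm Sig (App f ts) = (f \<in> Sig \<and> length ts = fst f \<and> (\<forall>t \<in> set ts. wf_trm Sig t))"

definition poly_ops :: "'a sym \<Rightarrow> 'a list \<Rightarrow> 'a" where
  "poly_ops = (\<lambda>(n, f) xs. f xs)"

definition holds_in :: "'b set \<Rightarrow> ('f \<Rightarrow> 'b list \<Rightarrow> 'b) \<Rightarrow> 'f trm \<Rightarrow> 'f trm \<Rightarrow> bool" where
  "holds_in B ops l r \<longleftrightarrow> (\<forall>s. (\<forall>i. s i \<in> B) \<longrightarrow> eval_trm ops s l = eval_trm ops s r)"

definition is_algebra :: "'a set \<Rightarrow> (nat \<times> 'a list set) set \<Rightarrow> 'b set \<Rightarrow> ('a sym \<Rightarrow> 'b list \<Rightarrow> 'b) \<Rightarrow> bool" where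
  "is_algebra A Rels B ops \<longleftrightarrow> B \<noteq> {} \<and>
     (\<forall>(n, f) \<in> poly_sig A Rels. \<forall>xs. length xs = n \<and> set xs \<subseteq> B \<longrightarrow> ops (n, f) xs \<in> B)"

text \<open>Membership in the variety V(Alg(A)) generated by Alg(A): the class of
  algebras of the same signature satisfying every identity of Alg(A)
  (equivalently, by Birkhoff, HSP(Alg(A))).\<close>
definition in_variety :: "'a set \<Rightarrow> (nat \<times> 'a list set) set \<Rightarrow> 'b set \<Rightarrow> ('a sym \<Rightarrow> 'b list \<Rightarrow> 'b) \<Rightarrow> bool" where
  "in_variety A Rels B ops \<longleftrightarrow> is_algebra A Rels B ops \<and>
     (\<forall>l r. wf_trm (poly_sig A Rels) l \<and> wf_trm (poly_sig A Rels) r \<and>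
            holds_in A poly_ops l r \<longrightarrow> holds_in B ops l r)"

definition congruence :: "'a set \<Rightarrow> (nat \<times> 'a list set) set \<Rightarrow> 'b set \<Rightarrow> ('a sym \<Rightarrow> 'b list \<Rightarrow> 'b) \<Rightarrow> ('b \<times> 'b) set \<Rightarrow> bool" where
  "congruence A Rels B ops \<theta> \<longleftrightarrow> equiv B \<theta> \<and>
     (\<forall>(n, f) \<in> poly_sig A Rels. \<forall>xs ys. length xs = n \<and> length ys = n \<and>
        set xs \<subseteq> B \<and> set ys \<subseteq> B \<and> (\<forall>i<n. (xs ! i, ys ! i) \<in> \<theta>) \<longrightarrow>
        (ops (n, f) xs, ops (n, f) ys) \<in> \<theta>)"

definition subdirectly_irreducible :: "'a set \<Rightarrow> (nat \<times> 'a list set) set \<Rightarrow> 'b set \<Rightarrow> ('a sym \<Rightarrow> 'b list \<Rightarrow> 'b) \<Rightarrow> bool" where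
  "subdirectly_irreducible A Rels B ops \<longleftrightarrow>
     \<Inter> {\<theta>. congruence A Rels B ops \<theta> \<and> \<theta> \<noteq> Id_on B} \<noteq> Id_on B"

definition subalg_product :: "'a set \<Rightarrow> (nat \<times> 'a list set) set \<Rightarrow> 'b set \<Rightarrow> ('a sym \<Rightarrow> 'b list \<Rightarrow> 'b)
    \<Rightarrow> 'b set \<Rightarrow> ('a sym \<Rightarrow> 'b list \<Rightarrow> 'b) \<Rightarrow> ('b \<times> 'b) set \<Rightarrow> bool" where
  "subalg_product A Rels B1 ops1 B2 ops2 R \<longleftrightarrow> R \<subseteq> B1 \<times> B2 \<and>
     (\<forall>(n, f) \<in> poly_sig A Rels. \<forall>ps. length ps = n \<and> set ps \<subseteq> R \<longrightarrow>
        (ops1 (n, f) (map fst ps), ops2 (n, f) (map snd ps)) \<in> R)"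

definition is_isomorphism :: "'a set \<Rightarrow> (nat \<times> 'a list set) set \<Rightarrow> 'b set \<Rightarrow> ('a sym \<Rightarrow> 'b list \<Rightarrow> 'b)
    \<Rightarrow> 'b set \<Rightarrow> ('a sym \<Rightarrow> 'b list \<Rightarrow> 'b) \<Rightarrow> ('b \<Rightarrow> 'b) \<Rightarrow> bool" where
  "is_isomorphism A Rels B1 ops1 B2 ops2 h \<longleftrightarrow> bij_betw h B1 B2 \<and>
     (\<forall>(n, f) \<in> poly_sig A Rels. \<forall>xs. length xs = n \<and> set xs \<subseteq> B1 \<longrightarrow>
        h (ops1 (n, f) xs) = ops2 (n, f) (map h xs))"

definition theta_rel :: "'b set \<Rightarrow> ('b \<times> 'b) set \<Rightarrow> ('b \<times> 'b) set" where
  "theta_rel Bx Rxy = {(a, a'). a \<in> Bx \<and> a' \<in> Bx \<and> (\<exists>b. (a, b) \<in> Rxy \<and> (a', b) \<in> Rxy)}"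

definition mu_rel :: "'v set \<Rightarrow> ('v \<Rightarrow> 'b set) \<Rightarrow> ('v \<Rightarrow> 'v \<Rightarrow> ('b \<times> 'b) set) \<Rightarrow> 'v \<Rightarrow> ('b \<times> 'b) set" where
  "mu_rel V D R x = (\<Inter>y \<in> V - {x}. theta_rel (D x) (R x y))"

definition prime_dom :: "'v set \<Rightarrow> ('v \<Rightarrow> 'b set) \<Rightarrow> ('v \<Rightarrow> 'v \<Rightarrow> ('b \<times> 'b) set) \<Rightarrow> 'v \<Rightarrow> bool" where
  "prime_dom V D R x \<longleftrightarrow> mu_rel V D R x = Id_on (D x)"

text \<open>An instance (V, {A_x}, {R_xy}) over the variety V(Alg(A)), |V| > 1.
  (The weight function w plays no role in the statement and is omitted.)\<close>
definition csp_instance :: "'a set \<Rightarrow> (nat \<times> 'a list set) set \<Rightarrow> 'v set \<Rightarrow> ('v \<Rightarrow> 'b set)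
    \<Rightarrow> ('v \<Rightarrow> 'a sym \<Rightarrow> 'b list \<Rightarrow> 'b) \<Rightarrow> ('v \<Rightarrow> 'v \<Rightarrow> ('b \<times> 'b) set) \<Rightarrow> bool" where
  "csp_instance A Rels V D Op R \<longleftrightarrow>
     finite V \<and> card V > 1 \<and>
     (\<forall>x\<in>V. finite (D x) \<and> in_variety A Rels (D x) (Op x)) \<and>
     (\<forall>x\<in>V. \<forall>y\<in>V. subalg_product A Rels (D x) (Op x) (D y) (Op y) (R x y)) \<and>
     (\<forall>x\<in>V. R x x = Id_on (D x)) \<and>
     (\<forall>x\<in>V. \<forall>y\<in>V. R y x = (R x y)\<inverse>) \<and>
     (\<forall>x\<in>V. \<forall>y\<in>V. x \<noteq> y \<longrightarrow> fst ` R x y = D x \<and> snd ` R x y = D y)"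

definition iso_related :: "'a set \<Rightarrow> (nat \<times> 'a list set) set \<Rightarrow> ('v \<Rightarrow> 'b set)
    \<Rightarrow> ('v \<Rightarrow> 'a sym \<Rightarrow> 'b list \<Rightarrow> 'b) \<Rightarrow> ('v \<Rightarrow> 'v \<Rightarrow> ('b \<times> 'b) set) \<Rightarrow> 'v \<Rightarrow> 'v \<Rightarrow> bool" where
  "iso_related A Rels D Op R x y \<longleftrightarrow>
     (\<exists>h. is_isomorphism A Rels (D x) (Op x) (D y) (Op y) h \<and> R x y = {(a, h a) | a. a \<in> D x})"

end

theory Submission
  imports Defs
begin

lemma maltsev_ids:
  assumes "in_variety A Rels B ops" "maltsev_polymorphism A Rels m" "a \<in> B" "b \<in> B"
  shows "ops (3, m) [a, b, b] = a \<and> ops (3, m) [b, b, a] = a"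
proof -
  have pm: "(3, m) \<in> poly_sig A Rels" using assms(2)
    by (simp add: poly_sig_def maltsev_polymorphism_def)
  have h1: "holds_in A poly_ops (App (3, m) [Var 0, Var 1, Var 1]) (Var 0)"
    using assms(2) by (simp add: holds_in_def poly_ops_def maltsev_polymorphism_def)
  have h2: "holds_in A poly_ops (App (3, m) [Var 0, Var 0, Var 1]) (Var 1)"
    using assms(2) by (simp add: holds_in_def poly_ops_def maltsev_polymorphism_def)
  have g1: "holds_in B ops (App (3, m) [Var 0, Var 1, Var 1]) (Var 0)"
    using assms(1) h1 pm unfolding in_variety_def by simp
  have g2: "holds_in B ops (App (3, m) [Var 0, Var 0, Var 1]) (Var 1)"
    using assms(1) h2 pm unfolding in_variety_def by simp
  let ?s = "\<lambda>i::nat. if i = 0 then a else b"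
  have "\<forall>i. ?s i \<in> B" using assms(3,4) by simp
  then have "eval_trm ops ?s (App (3, m) [Var 0, Var 1, Var 1]) = eval_trm ops ?s (Var 0)"
    by (rule mp[OF spec[OF g1[unfolded holds_in_def]]])
  moreover have "eval_trm ops (\<lambda>i::nat. if i = 0 then b else a) (App (3, m) [Var 0, Var 0, Var 1])
      = eval_trm ops (\<lambda>i::nat. if i = 0 then b else a) (Var 1)"
    by (rule mp[OF spec[OF g2[unfolded holds_in_def]]]) (use assms(3,4) in simp)
  ultimately show ?thesis by simp
qed

theorem mainTheorem8:
  fixes A :: "'a set" and Rels :: "(nat \<times> 'a list set) set"
    and V :: "'v set" and D :: "'v \<Rightarrow> 'b set"
    and Op :: "'v \<Rightarrow> 'a sym \<Rightarrow> 'b list \<Rightarrow> 'b"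
    and R :: "'v \<Rightarrow> 'v \<Rightarrow> ('b \<times> 'b) set"
    and x :: 'v
  assumes "finite_rel_structure A Rels"
    and "\<exists>f. majority_polymorphism A Rels f"
    and "\<exists>m. maltsev_polymorphism A Rels m"
    and "csp_instance A Rels V D Op R"
    and "\<forall>z\<in>V. card (D z) = 1 \<or>
           (subdirectly_irreducible A Rels (D z) (Op z) \<and> prime_dom V D R z)"
    and "x \<in> V" and "card (D x) \<ge> 2"
    and "\<forall>z\<in>V. card (D z) \<le> card (D x)"
  shows "\<exists>y\<in>V. y \<noteq> x \<and> iso_related A Rels D Op R x y"
proof -
  note C = assms(4)[unfolded csp_instance_def]
  have inst1a: "finite V" using C[THEN conjunct1] .
  have inst1b: "card V > 1" using C[THEN conjunct2, THEN conjunct1] .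
  note inst1 = inst1a inst1b
  have c3: "\<forall>x\<in>V. finite (D x) \<and> in_variety A Rels (D x) (Op x)"
    using C[THEN conjunct2, THEN conjunct2, THEN conjunct1] .
  have c4: "\<forall>x\<in>V. \<forall>y\<in>V. subalg_product A Rels (D x) (Op x) (D y) (Op y) (R x y)"
    using C[THEN conjunct2, THEN conjunct2, THEN conjunct2, THEN conjunct1] .
  have c7: "\<forall>x\<in>V. \<forall>y\<in>V. x \<noteq> y \<longrightarrow> fst ` R x y = D x \<and> snd ` R x y = D y"
    using C[THEN conjunct2, THEN conjunct2, THEN conjunct2, THEN conjunct2, THEN conjunct2, THEN conjunct2] .
  have instF: "\<And>z. z \<in> V \<Longrightarrow> finite (D z)" "\<And>z. z \<in> V \<Longrightarrow> in_variety A Rels (D z) (Op z)"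
    using c3 by blast+
  have instS: "\<And>z w. z \<in> V \<Longrightarrow> w \<in> V \<Longrightarrow> subalg_product A Rels (D z) (Op z) (D w) (Op w) (R z w)"
    using c4 by blast
  have instP: "\<And>z w. z \<in> V \<Longrightarrow> w \<in> V \<Longrightarrow> z \<noteq> w \<Longrightarrow> fst ` R z w = D z \<and> snd ` R z w = D w"
    using c7 by blast
  obtain m where mal: "maltsev_polymorphism A Rels m" using assms(3) by blast
  have SI: "subdirectly_irreducible A Rels (D x) (Op x)" and pr: "prime_dom V D R x"
    proof -
    have "card (D x) \<noteq> 1" using assms(7) by simp
    then show "subdirectly_irreducible A Rels (D x) (Op x)" "prime_dom V D R x"
      using assms(5) assms(6) by blast+
  qed
  define th where "th y = theta_rel (D x) (R x y)" for y
  have cong: "congruence A Rels (D x) (Op x) (th y)" if yV: "y \<in> V" and yx: "y \<noteq> x" for y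
  proof -
    have sub: "subalg_product A Rels (D x) (Op x) (D y) (Op y) (R x y)"
      using instS assms(6) yV by blast
    have RD: "R x y \<subseteq> D x \<times> D y" using sub unfolding subalg_product_def by blast
    have fs: "fst ` R x y = D x" "snd ` R x y = D y" using instP assms(6) yV yx by blast+
    have vx: "in_variety A Rels (D x) (Op x)" and vy: "in_variety A Rels (D y) (Op y)"
      using instF assms(6) yV by blast+
    have pm: "(3, m) \<in> poly_sig A Rels" using mal
      by (simp add: poly_sig_def maltsev_polymorphism_def)
    have closed: "(Op x (3,m) (map fst ps), Op y (3,m) (map snd ps)) \<in> R x y"
      if "length ps = 3" "set ps \<subseteq> R x y" for ps
      using sub pm that unfolding subalg_product_def by blast
    have eqv: "equiv (D x) (th y)"
    proof (rule equivI)
      show "th y \<subseteq> D x \<times> D x" unfolding th_def theta_rel_def by blast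
      show "refl_on (D x) (th y)" unfolding refl_on_def th_def theta_rel_def
        using fs(1) by force
      show "sym (th y)" unfolding sym_def th_def theta_rel_def by blast
      show "trans (th y)" unfolding trans_def
      proof (intro allI impI)
        fix a a' a''
        assume "(a, a') \<in> th y" "(a', a'') \<in> th y"
        then obtain b b' where ab: "a \<in> D x" "a' \<in> D x" "a'' \<in> D x"
          "(a, b) \<in> R x y" "(a', b) \<in> R x y" "(a', b') \<in> R x y" "(a'', b') \<in> R x y"
          unfolding th_def theta_rel_def by blast
        have bb: "b \<in> D y" "b' \<in> D y" using RD ab by auto
        have "(Op x (3,m) (map fst [(a,b),(a',b),(a',b')]), Op y (3,m) (map snd [(a,b),(a',b),(a',b')])) \<in> R x y"
          using closed[of "[(a,b),(a',b),(a',b')]"] ab by simp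
        then have "(a, b') \<in> R x y"
          using maltsev_ids[OF vx mal ab(1) ab(2)] maltsev_ids[OF vy mal bb(2) bb(1)] by simp
        then show "(a, a'') \<in> th y" unfolding th_def theta_rel_def using ab by blast
      qed
    qed
    have compat: "(Op x (n, f) xs, Op x (n, f) ys) \<in> th y"
      if nf: "(n, f) \<in> poly_sig A Rels" and xy: "length xs = n" "length ys = n"
        "set xs \<subseteq> D x" "set ys \<subseteq> D x" "\<forall>i<n. (xs ! i, ys ! i) \<in> th y" for n f xs ys
    proof -
      define bs where "bs i = (SOME b. (xs ! i, b) \<in> R x y \<and> (ys ! i, b) \<in> R x y)" for i
      have bsP: "(xs ! i, bs i) \<in> R x y \<and> (ys ! i, bs i) \<in> R x y" if "i < n" for i
      proof -
        have "\<exists>b. (xs ! i, b) \<in> R x y \<and> (ys ! i, b) \<in> R x y"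
          using xy(5) that unfolding th_def theta_rel_def by blast
        then show ?thesis unfolding bs_def by (rule someI_ex)
      qed
      define ps1 where "ps1 = map (\<lambda>i. (xs ! i, bs i)) [0..<n]"
      define ps2 where "ps2 = map (\<lambda>i. (ys ! i, bs i)) [0..<n]"
      have m1: "map fst ps1 = xs" unfolding ps1_def using xy(1) map_nth[of xs]
        by (simp add: comp_def)
      have m2: "map fst ps2 = ys" unfolding ps2_def using xy(2) map_nth[of ys]
        by (simp add: comp_def)
      have s12: "map snd ps1 = map snd ps2" unfolding ps1_def ps2_def by simp
      have "set ps1 \<subseteq> R x y" "set ps2 \<subseteq> R x y" unfolding ps1_def ps2_def using bsP by auto
      moreover have "length ps1 = n" "length ps2 = n" unfolding ps1_def ps2_def by simp_all
      ultimately have "(Op x (n,f) (map fst ps1), Op y (n,f) (map snd ps1)) \<in> R x y"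
        "(Op x (n,f) (map fst ps2), Op y (n,f) (map snd ps2)) \<in> R x y"
        using sub nf unfolding subalg_product_def by blast+
      then have "(Op x (n,f) xs, Op y (n,f) (map snd ps1)) \<in> R x y"
        "(Op x (n,f) ys, Op y (n,f) (map snd ps1)) \<in> R x y"
        using m1 m2 s12 by simp_all
      then show "(Op x (n, f) xs, Op x (n, f) ys) \<in> th y"
        unfolding th_def theta_rel_def using RD by blast
    qed
    show ?thesis unfolding congruence_def using eqv compat by blast
  qed
  have "\<exists>y\<in>V - {x}. th y = Id_on (D x)"
  proof (rule ccontr)
    assume nex: "\<not> ?thesis"
    define S where "S = {\<theta>. congruence A Rels (D x) (Op x) \<theta> \<and> \<theta> \<noteq> Id_on (D x)}"
    have inS: "th y \<in> S" if "y \<in> V - {x}" for y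
      using nex cong that unfolding S_def by blast
    have ne: "V - {x} \<noteq> {}"
    proof
      assume "V - {x} = {}"
      then have "V \<subseteq> {x}" by blast
      then have "card V \<le> 1" using card_mono[of "{x}" V] by simp
      then show False using inst1 by simp
    qed
    have "\<Inter>S \<subseteq> mu_rel V D R x" unfolding mu_rel_def th_def[symmetric]
      using inS by blast
    then have s1: "\<Inter>S \<subseteq> Id_on (D x)" using pr unfolding prime_dom_def by simp
    have "Id_on (D x) \<subseteq> \<Inter>S"
      unfolding S_def congruence_def equiv_def refl_on_def by blast
    with s1 have "\<Inter>S = Id_on (D x)" by blast
    then show False using SI unfolding subdirectly_irreducible_def S_def by simp
  qed
  then obtain y where yV: "y \<in> V" and yx: "y \<noteq> x" and thy: "th y = Id_on (D x)" by blast
  have sub: "subalg_product A Rels (D x) (Op x) (D y) (Op y) (R x y)"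
    using instS assms(6) yV by blast
  have RD: "R x y \<subseteq> D x \<times> D y" using sub unfolding subalg_product_def by blast
  have fs: "fst ` R x y = D x" "snd ` R x y = D y" using instP assms(6) yV yx by blast+
  have finx: "finite (D x)" and finy: "finite (D y)" using instF assms(6) yV by blast+
  have uniqa: "a = a'" if "(a, b) \<in> R x y" "(a', b) \<in> R x y" for a a' b
  proof -
    have "(a, a') \<in> th y" unfolding th_def theta_rel_def using that RD by blast
    then show ?thesis using thy by auto
  qed
  define g where "g b = (SOME a. (a, b) \<in> R x y)" for b
  have gP: "(g b, b) \<in> R x y" if "b \<in> D y" for b
  proof -
    have "\<exists>a. (a, b) \<in> R x y" using fs(2) that by force
    then show ?thesis unfolding g_def by (rule someI_ex)
  qed
  have gim: "g ` D y = D x"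
  proof
    show "g ` D y \<subseteq> D x" using gP RD by blast
    show "D x \<subseteq> g ` D y"
    proof
      fix a assume "a \<in> D x"
      then obtain b where "(a, b) \<in> R x y" using fs(1) by force
      then have "b \<in> D y" "g b = a" using RD gP uniqa by blast+
      then show "a \<in> g ` D y" by blast
    qed
  qed
  have "card (g ` D y) \<le> card (D y)" using card_image_le[OF finy] .
  moreover have "card (D y) \<le> card (D x)" using assms(8) yV by blast
  ultimately have "card (g ` D y) = card (D y)" using gim by simp
  then have ginj: "inj_on g (D y)" using eq_card_imp_inj_on[OF finy] by blast
  have uniqb: "b = b'" if "(a, b) \<in> R x y" "(a, b') \<in> R x y" for a b b'
  proof -
    have bb: "b \<in> D y" "b' \<in> D y" using that RD by auto
    have "g b = a" "g b' = a" using gP[OF bb(1)] gP[OF bb(2)] that uniqa by blast+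
    then show ?thesis using ginj bb unfolding inj_on_def by metis
  qed
  define h where "h a = (SOME b. (a, b) \<in> R x y)" for a
  have hP: "(a, h a) \<in> R x y" if "a \<in> D x" for a
  proof -
    have "\<exists>b. (a, b) \<in> R x y" using fs(1) that by force
    then show ?thesis unfolding h_def by (rule someI_ex)
  qed
  have graph: "R x y = {(a, h a) | a. a \<in> D x}"
  proof
    show "R x y \<subseteq> {(a, h a) | a. a \<in> D x}"
    proof clarify
      fix a b assume ab: "(a, b) \<in> R x y"
      then have "a \<in> D x" using RD by blast
      then have "b = h a" using uniqb ab hP by blast
      then show "\<exists>a'. (a, b) = (a', h a') \<and> a' \<in> D x" using \<open>a \<in> D x\<close> by blast
    qed
    show "{(a, h a) | a. a \<in> D x} \<subseteq> R x y" using hP by blast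
  qed
  have bij: "bij_betw h (D x) (D y)"
    unfolding bij_betw_def
  proof
    show "inj_on h (D x)" unfolding inj_on_def using hP uniqa by metis
    show "h ` D x = D y"
    proof
      show "h ` D x \<subseteq> D y" using hP RD by blast
      show "D y \<subseteq> h ` D x"
      proof
        fix b assume "b \<in> D y"
        then obtain a where "(a, b) \<in> R x y" using fs(2) by force
        then have "a \<in> D x" "h a = b" using RD hP uniqb by blast+
        then show "b \<in> h ` D x" by blast
      qed
    qed
  qed
  have homs: "h (Op x (n, f) xs) = Op y (n, f) (map h xs)"
    if nf: "(n, f) \<in> poly_sig A Rels" and len: "length xs = n" and xsD: "set xs \<subseteq> D x" for n f xs
  proof -
    let ?ps = "map (\<lambda>a. (a, h a)) xs"
    have "set ?ps \<subseteq> R x y" using hP xsD by auto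
    moreover have "length ?ps = n" using len by simp
    moreover have "\<forall>ps. length ps = n \<and> set ps \<subseteq> R x y \<longrightarrow>
        (Op x (n,f) (map fst ps), Op y (n,f) (map snd ps)) \<in> R x y"
      using sub nf unfolding subalg_product_def by blast
    ultimately have r: "(Op x (n,f) (map fst ?ps), Op y (n,f) (map snd ?ps)) \<in> R x y"
      by blast
    then have "(Op x (n,f) xs, Op y (n,f) (map h xs)) \<in> R x y" by (simp add: comp_def)
    moreover have "Op x (n,f) xs \<in> D x" using calculation RD by blast
    ultimately show "h (Op x (n, f) xs) = Op y (n, f) (map h xs)"
      using hP uniqb by blast
  qed
  have hom: "\<forall>(n, f) \<in> poly_sig A Rels. \<forall>xs. length xs = n \<and> set xs \<subseteq> D x \<longrightarrow>
        h (Op x (n, f) xs) = Op y (n, f) (map h xs)" using homs by blast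
  have "iso_related A Rels D Op R x y"
    unfolding iso_related_def is_isomorphism_def using bij hom graph by blast
  then show ?thesis using yV yx by blast
qed

end
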